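(* Let $T>0$, $f:[0,T]\times\mathbb{R}^d\to\mathbb{R}^d$, $\sigma:[0,T]\times\mathbb{R}^d\to\mathbb{R}$ smooth, and let $(p_\tau)_{0\le\tau\le T}$ be the (smooth, positive) densities of the forward process $\mathrm{d} Y_\tau = f_\tau(Y_\tau)\mathrm{d}\tau+\sqrt2\sigma_\tau(Y_\tau)\mathrm{d} B_\tau$, $Y_0\sim p_0$. Let $b:[0,T]\times\mathbb{R}^d\to\mathbb{R}$ be smooth with $b_\tau(y)\neq 0$, let $\hat s:[0,T]\times\mathbb{R}^d\to\mathbb{R}^d$ be smooth (an approximation of $\nabla\log p_\cdot$), and let $p_\infty$ be a smooth positive density. Let $(\hat p_\tau)_{0\le\tau\le T}$ be the densities of the process $$\mathrm{d}\hat Y_\tau = \hat f_\tau(\hat Y_\tau)\mathrm{d}\tau + \sqrt2\, b_\tau(\hat Y_\tau)\mathrm{d} B_\tau,\quad \hat Y_0\sim p_\infty,\qquad \hat f_\tau := -f_{T-\tau} + \nabla(\sigma_{T-\tau}^2+b_\tau^2) + (\sigma_{T-\tau}^2+b_\tau^2)\hat s_{T-\tau}.$$ Assume all these densities are regular enough for the Fokker–Planck equations, their transport reformulations and the KL time-derivative computation (interchange of derivative and integral, vanishing boundary terms) to hold. Then $$\mathrm{KL}(p_0\mid\hat p_T) \le \mathrm{KL}(p_T\mid p_\infty) + \int_0^T\int_{\mathbb{R}^d}\frac{\bigl(\sigma_{T-\tau}^2(y)+b_\tau^2(y)\bigr)^2}{4b_\tau^2(y)}\bigl\|\nabla\log p_{T-\tau}(y)-\hat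 s_{T-\tau}(y)\bigr\|^2 p_{T-\tau}(y)\,\mathrm{d} y\,\mathrm{d}\tau.$$
   Context: $B$ is a standard $d$-dimensional Brownian motion; $\mathrm{KL}(p\mid q)=\int p\log(p/q)$. *)

theory Defs
  imports "HOL-Analysis.Analysis"
begin

text \<open>Space R^d is an arbitrary Euclidean space 'a. Time-dependent fields are curried:
  u :: real => 'a => ...  (u t y = u_t(y)).\<close>

definition grad :: "('a::euclidean_space \<Rightarrow> real) \<Rightarrow> 'a \<Rightarrow> 'a" where
  "grad g x = (\<Sum>i\<in>Basis. frechet_derivative g (at x) i *\<^sub>R i)"

definition divg :: "('a::euclidean_space \<Rightarrow> 'a) \<Rightarrow> 'a \<Rightarrow> real" where
  "divg V x = (\<Sum>i\<in>Basis. frechet_derivative V (at x) i \<bullet> i)"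

definition lap :: "('a::euclidean_space \<Rightarrow> real) \<Rightarrow> 'a \<Rightarrow> real" where
  "lap g = divg (grad g)"

definition dt :: "(real \<Rightarrow> 'a \<Rightarrow> real) \<Rightarrow> real \<Rightarrow> 'a \<Rightarrow> real" where
  "dt u \<tau> x = deriv (\<lambda>t. u t x) \<tau>"

fun iter_pd :: "'a::euclidean_space list \<Rightarrow> ('a \<Rightarrow> 'b::real_normed_vector) \<Rightarrow> 'a \<Rightarrow> 'b" where
  "iter_pd [] g = g"
| "iter_pd (v # vs) g = (\<lambda>x. frechet_derivative (iter_pd vs g) (at x) v)"

definition smooth_on :: "'a::euclidean_space set \<Rightarrow> ('a \<Rightarrow> 'b::real_normed_vector) \<Rightarrow> bool" where
  "smooth_on U g \<longleftrightarrow> open U \<and>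
     (\<forall>vs. set vs \<subseteq> Basis \<longrightarrow> (\<forall>x\<in>U. iter_pd vs g differentiable (at x)))"

text \<open>Smooth on an arbitrary (e.g. closed) set: restriction of a function smooth on an open neighbourhood.\<close>
definition smooth_on_set :: "'a::euclidean_space set \<Rightarrow> ('a \<Rightarrow> 'b::real_normed_vector) \<Rightarrow> bool" where
  "smooth_on_set S g \<longleftrightarrow> (\<exists>U. S \<subseteq> U \<and> smooth_on U g)"

definition is_pos_density :: "('a::euclidean_space \<Rightarrow> real) \<Rightarrow> bool" where
  "is_pos_density p \<longleftrightarrow> (\<forall>y. p y > 0) \<and> integrable lborel p \<and> (\<integral>y. p y \<partial>lborel) = 1"

definition KL :: "('a::euclidean_space \<Rightarrow> real) \<Rightarrow> ('a \<Rightarrow> real) \<Rightarrow> real" where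
  "KL p q = (\<integral>y. p y * ln (p y / q y) \<partial>lborel)"

definition fhat :: "real \<Rightarrow> (real \<Rightarrow> 'a \<Rightarrow> 'a) \<Rightarrow> (real \<Rightarrow> 'a \<Rightarrow> real) \<Rightarrow> (real \<Rightarrow> 'a \<Rightarrow> real)
      \<Rightarrow> (real \<Rightarrow> 'a \<Rightarrow> 'a) \<Rightarrow> real \<Rightarrow> 'a \<Rightarrow> 'a::euclidean_space" where
  "fhat T f sig b shat \<tau> y =
     - f (T - \<tau>) y + grad (\<lambda>z. (sig (T - \<tau>) z)\<^sup>2 + (b \<tau> z)\<^sup>2) y
     + ((sig (T - \<tau>) y)\<^sup>2 + (b \<tau> y)\<^sup>2) *\<^sub>R shat (T - \<tau>) y"

text \<open>Probability fluxes of the transport (divergence) forms of the Fokker-Planck equations: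
  d/dtau p_{T-tau} = div (Jrev tau),  d/dtau phat_tau = div (Jhat tau).\<close>
definition Jrev :: "real \<Rightarrow> (real \<Rightarrow> 'a \<Rightarrow> real) \<Rightarrow> (real \<Rightarrow> 'a \<Rightarrow> 'a) \<Rightarrow> (real \<Rightarrow> 'a \<Rightarrow> real)
      \<Rightarrow> real \<Rightarrow> 'a \<Rightarrow> 'a::euclidean_space" where
  "Jrev T p f sig \<tau> y = p (T - \<tau>) y *\<^sub>R f (T - \<tau>) y - grad (\<lambda>z. (sig (T - \<tau>) z)\<^sup>2 * p (T - \<tau>) z) y"

definition Jhat :: "(real \<Rightarrow> 'a \<Rightarrow> real) \<Rightarrow> (real \<Rightarrow> 'a \<Rightarrow> 'a) \<Rightarrow> (real \<Rightarrow> 'a \<Rightarrow> real)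
      \<Rightarrow> real \<Rightarrow> 'a \<Rightarrow> 'a::euclidean_space" where
  "Jhat ph fh b \<tau> y = - (ph \<tau> y *\<^sub>R fh \<tau> y) + grad (\<lambda>z. (b \<tau> z)\<^sup>2 * ph \<tau> z) y"

end

theory Submission
  imports Defs
begin

lemma grad_char:
  fixes g :: "'a::euclidean_space \<Rightarrow> real"
  assumes "(g has_derivative (\<lambda>v. w \<bullet> v)) (at x)"
  shows "grad g x = w"
proof -
  have "frechet_derivative g (at x) = (\<lambda>v. w \<bullet> v)"
    using frechet_derivative_at[OF assms] by simp
  then have "grad g x = (\<Sum>i\<in>Basis. (w \<bullet> i) *\<^sub>R i)" unfolding grad_def by simp
  then show ?thesis by (simp add: euclidean_representation)
qed

lemma has_derivative_grad:
  fixes g :: "'a::euclidean_space \<Rightarrow> real"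
  assumes "g differentiable (at x)"
  shows "(g has_derivative (\<lambda>v. grad g x \<bullet> v)) (at x)"
proof -
  let ?g' = "frechet_derivative g (at x)"
  have d: "(g has_derivative ?g') (at x)" using assms frechet_derivative_works by blast
  have lin: "linear ?g'" using d has_derivative_linear by blast
  have "?g' v = grad g x \<bullet> v" for v
  proof -
    have "?g' v = ?g' (\<Sum>i\<in>Basis. (v \<bullet> i) *\<^sub>R i)" by (simp add: euclidean_representation)
    also have "\<dots> = (\<Sum>i\<in>Basis. (v \<bullet> i) * ?g' i)"
      using lin by (simp add: linear_sum linear_scale)
    also have "\<dots> = (\<Sum>i\<in>Basis. v \<bullet> (?g' i *\<^sub>R i))"
      by (intro sum.cong) (auto simp: mult.commute)
    also have "\<dots> = grad g x \<bullet> v" unfolding grad_def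
      by (simp add: inner_sum_right inner_commute)
    finally show ?thesis .
  qed
  then show ?thesis using d by (metis (no_types, lifting) ext)
qed

lemma divg_char:
  assumes "(V has_derivative V') (at x)"
  shows "divg V x = (\<Sum>i\<in>Basis. V' i \<bullet> i)"
  using frechet_derivative_at[OF assms] unfolding divg_def by simp

lemma divg_scaleR:
  fixes V :: "'a::euclidean_space \<Rightarrow> 'a"
  assumes "\<phi> differentiable (at x)" "V differentiable (at x)"
  shows "divg (\<lambda>z. \<phi> z *\<^sub>R V z) x = \<phi> x * divg V x + grad \<phi> x \<bullet> V x"
proof -
  let ?V' = "frechet_derivative V (at x)"
  have dV: "(V has_derivative ?V') (at x)" using assms frechet_derivative_works by blast
  have dp: "(\<phi> has_derivative (\<lambda>v. grad \<phi> x \<bullet> v)) (at x)" using has_derivative_grad assms by blast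
  have "((\<lambda>z. \<phi> z *\<^sub>R V z) has_derivative (\<lambda>h. \<phi> x *\<^sub>R ?V' h + (grad \<phi> x \<bullet> h) *\<^sub>R V x)) (at x)"
    by (rule has_derivative_scaleR[OF dp dV])
  then have "divg (\<lambda>z. \<phi> z *\<^sub>R V z) x = (\<Sum>i\<in>Basis. (\<phi> x *\<^sub>R ?V' i + (grad \<phi> x \<bullet> i) *\<^sub>R V x) \<bullet> i)"
    by (rule divg_char)
  also have "\<dots> = \<phi> x * (\<Sum>i\<in>Basis. ?V' i \<bullet> i) + (\<Sum>i\<in>Basis. (grad \<phi> x \<bullet> i) * (V x \<bullet> i))"
    by (simp only: inner_add_left inner_scaleR_left sum.distrib sum_distrib_left)
  also have "\<dots> = \<phi> x * divg V x + grad \<phi> x \<bullet> V x"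
    by (simp only: divg_def euclidean_inner[of "grad \<phi> x" "V x"])
  finally show ?thesis .
qed

lemma divg_diff:
  fixes A B :: "'a::euclidean_space \<Rightarrow> 'a"
  assumes "A differentiable (at x)" "B differentiable (at x)"
  shows "divg (\<lambda>z. A z - B z) x = divg A x - divg B x"
proof -
  have dA: "(A has_derivative frechet_derivative A (at x)) (at x)" using assms frechet_derivative_works by blast
  have dB: "(B has_derivative frechet_derivative B (at x)) (at x)" using assms frechet_derivative_works by blast
  have "divg (\<lambda>z. A z - B z) x = (\<Sum>i\<in>Basis. (frechet_derivative A (at x) i - frechet_derivative B (at x) i) \<bullet> i)"
    by (rule divg_char[OF has_derivative_diff[OF dA dB]])
  also have "\<dots> = divg A x - divg B x"
    unfolding divg_def by (simp only: inner_diff_left sum_subtractf)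
  finally show ?thesis .
qed

lemma divg_neg_add:
  fixes A B :: "'a::euclidean_space \<Rightarrow> 'a"
  assumes "A differentiable (at x)" "B differentiable (at x)"
  shows "divg (\<lambda>z. - A z + B z) x = - divg A x + divg B x"
proof -
  have dA: "(A has_derivative frechet_derivative A (at x)) (at x)" using assms frechet_derivative_works by blast
  have dB: "(B has_derivative frechet_derivative B (at x)) (at x)" using assms frechet_derivative_works by blast
  have "divg (\<lambda>z. - A z + B z) x = (\<Sum>i\<in>Basis. (- frechet_derivative A (at x) i + frechet_derivative B (at x) i) \<bullet> i)"
    by (rule divg_char[OF has_derivative_add[OF has_derivative_minus[OF dA] dB]])
  also have "\<dots> = - divg A x + divg B x"
    unfolding divg_def by (simp only: inner_add_left inner_minus_left sum.distrib sum_negf)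
  finally show ?thesis .
qed

lemma smooth_slice:
  assumes "smooth_on_set ({0..T} \<times> UNIV) G" "t0 \<in> {0..T}"
  shows "G differentiable (at (t0,z))"
    and "v \<in> Basis \<Longrightarrow> (\<lambda>x. frechet_derivative G (at x) v) differentiable (at (t0,z))"
proof -
  obtain U where U: "{0..T} \<times> UNIV \<subseteq> U" "smooth_on U G" using assms(1) unfolding smooth_on_set_def by blast
  have inU: "(t0,z) \<in> U" using U(1) assms(2) by blast
  show "G differentiable (at (t0,z))"
    using U(2) inU unfolding smooth_on_def by (metis empty_subsetI iter_pd.simps(1) list.set(1))
  assume v: "v \<in> Basis"
  have "iter_pd [v] G differentiable (at (t0,z))"
    using U(2) inU v unfolding smooth_on_def by (metis empty_subsetI insert_subset list.set(1) list.set(2))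
  then show "(\<lambda>x. frechet_derivative G (at x) v) differentiable (at (t0,z))" by simp
qed

lemma slice_deriv:
  assumes "G differentiable (at (t0,z))"
  shows "((\<lambda>w. G (t0,w)) has_derivative (\<lambda>h. frechet_derivative G (at (t0,z)) (0,h))) (at z)"
proof -
  have dG: "(G has_derivative frechet_derivative G (at (t0,z))) (at (t0,z))"
    using assms frechet_derivative_works by blast
  have dP: "((\<lambda>w. (t0,w)) has_derivative (\<lambda>h. (0,h))) (at z)"
    by (intro has_derivative_Pair has_derivative_const has_derivative_ident)
  show ?thesis using has_derivative_compose[OF dP dG] by (simp add: o_def)
qed

lemma slice_time:
  fixes G :: "real \<times> 'a::euclidean_space \<Rightarrow> real"
  assumes "G differentiable (at (s0,y))"
  shows "((\<lambda>s. G (s,y)) has_real_derivative frechet_derivative G (at (s0,y)) (1,0)) (at s0)"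
proof -
  let ?G' = "frechet_derivative G (at (s0,y))"
  have dG: "(G has_derivative ?G') (at (s0,y))"
    using assms frechet_derivative_works by blast
  have lin: "linear ?G'" using dG has_derivative_linear by blast
  have dP: "((\<lambda>s. (s,y)) has_derivative (\<lambda>h. (h,0))) (at s0)"
    by (intro has_derivative_Pair has_derivative_const has_derivative_ident)
  have c: "((\<lambda>s. G (s,y)) has_derivative (\<lambda>h. ?G' (h,0))) (at s0)"
    using has_derivative_compose[OF dP dG] by (simp add: o_def)
  have hf: "?G' (h,0) = ?G' (1,0) * h" for h
    using linear_scale[OF lin, of h "(1,0)"] by (simp add: mult.commute)
  have e: "(\<lambda>h. ?G' (h,0)) = (\<lambda>h. ?G' (1,0) * h)" using hf by (rule ext)
  show ?thesis unfolding has_field_derivative_def using c e by simp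
qed

definition C2 :: "('a::euclidean_space \<Rightarrow> real) \<Rightarrow> bool" where
  "C2 g \<longleftrightarrow> (\<forall>z. g differentiable (at z)) \<and>
     (\<forall>i\<in>Basis. \<forall>z. (\<lambda>w. frechet_derivative g (at w) i) differentiable (at z))"

lemma C2_slice:
  fixes P :: "real \<Rightarrow> 'a::euclidean_space \<Rightarrow> real"
  assumes "smooth_on_set ({0..T} \<times> UNIV) (\<lambda>(t,y). P t y)" "t0 \<in> {0..T}"
  shows "C2 (P t0)"
  unfolding C2_def
proof (intro conjI ballI allI)
  let ?G = "\<lambda>(t,y). P t y"
  fix z
  have "((\<lambda>w. ?G (t0,w)) has_derivative (\<lambda>h. frechet_derivative ?G (at (t0,z)) (0,h))) (at z)"
    by (rule slice_deriv[OF smooth_slice(1)[OF assms]])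
  then show "P t0 differentiable (at z)" unfolding differentiable_def by auto
next
  let ?G = "\<lambda>(t,y). P t y"
  fix i :: 'a and z assume i: "i \<in> Basis"
  have eq: "frechet_derivative (P t0) (at w) i = frechet_derivative ?G (at (t0,w)) (0,i)" for w
  proof -
    have "((\<lambda>w. ?G (t0,w)) has_derivative (\<lambda>h. frechet_derivative ?G (at (t0,w)) (0,h))) (at w)"
      by (rule slice_deriv[OF smooth_slice(1)[OF assms]])
    then have "(P t0 has_derivative (\<lambda>h. frechet_derivative ?G (at (t0,w)) (0,h))) (at w)"
      by simp
    from fun_cong[OF frechet_derivative_at[OF this], of i] show ?thesis by simp
  qed
  have vB: "(0,i) \<in> (Basis :: (real \<times> 'a) set)" using i by (simp add: Basis_prod_def)
  have d1: "(\<lambda>x. frechet_derivative ?G (at x) (0,i)) differentiable (at (t0,z))"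
    by (rule smooth_slice(2)[OF assms vB])
  have "((\<lambda>w. (t0,w)) has_derivative (\<lambda>h. (0,h))) (at z)"
    by (intro has_derivative_Pair has_derivative_const has_derivative_ident)
  then have d0: "(\<lambda>w. (t0,w)) differentiable (at z)" unfolding differentiable_def by blast
  have "((\<lambda>x. frechet_derivative ?G (at x) (0,i)) \<circ> (\<lambda>w. (t0,w))) differentiable (at z)"
    by (rule differentiable_chain_at[OF d0 d1])
  then show "(\<lambda>w. frechet_derivative (P t0) (at w) i) differentiable (at z)"
    by (simp add: eq o_def)
qed

lemma slice_diff_vec:
  fixes F :: "real \<Rightarrow> 'a::euclidean_space \<Rightarrow> 'b::real_normed_vector"
  assumes "smooth_on_set ({0..T} \<times> UNIV) (\<lambda>(t,y). F t y)" "t0 \<in> {0..T}"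
  shows "F t0 differentiable (at z)"
proof -
  have "((\<lambda>w. (\<lambda>(t,y). F t y) (t0,w)) has_derivative (\<lambda>h. frechet_derivative (\<lambda>(t,y). F t y) (at (t0,z)) (0,h))) (at z)"
    by (rule slice_deriv[OF smooth_slice(1)[OF assms]])
  then show ?thesis unfolding differentiable_def by auto
qed

lemma C2_diff: "C2 g \<Longrightarrow> g differentiable (at z)"
  unfolding C2_def by blast

lemma C2_add:
  assumes "C2 g" "C2 h"
  shows "C2 (\<lambda>z. g z + h z)"
  unfolding C2_def
proof (intro conjI ballI allI)
  fix z show "(\<lambda>z. g z + h z) differentiable (at z)"
    using assms C2_diff by (intro differentiable_add) auto
next
  fix i :: 'a and z assume i: "i \<in> Basis"
  have eq: "frechet_derivative (\<lambda>z. g z + h z) (at w) i = frechet_derivative g (at w) i + frechet_derivative h (at w) i" for w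
  proof -
    have "((\<lambda>z. g z + h z) has_derivative (\<lambda>v. frechet_derivative g (at w) v + frechet_derivative h (at w) v)) (at w)"
      using assms C2_diff frechet_derivative_works by (intro has_derivative_add) blast+
    from fun_cong[OF frechet_derivative_at[OF this], of i] show ?thesis by simp
  qed
  show "(\<lambda>w. frechet_derivative (\<lambda>z. g z + h z) (at w) i) differentiable (at z)"
    unfolding eq using assms i unfolding C2_def by (intro differentiable_add) auto
qed

lemma C2_mult:
  assumes "C2 g" "C2 h"
  shows "C2 (\<lambda>z. g z * h z)"
  unfolding C2_def
proof (intro conjI ballI allI)
  fix z show "(\<lambda>z. g z * h z) differentiable (at z)"
    using assms C2_diff by (intro differentiable_mult) auto
next
  fix i :: 'a and z assume i: "i \<in> Basis"
  have eq: "frechet_derivative (\<lambda>z. g z * h z) (at w) i = g w * frechet_derivative h (at w) i + frechet_derivative g (at w) i * h w" for w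
  proof -
    have "((\<lambda>z. g z * h z) has_derivative (\<lambda>v. g w * frechet_derivative h (at w) v + frechet_derivative g (at w) v * h w)) (at w)"
      using assms C2_diff frechet_derivative_works by (intro has_derivative_mult) blast+
    from fun_cong[OF frechet_derivative_at[OF this], of i] show ?thesis by simp
  qed
  show "(\<lambda>w. frechet_derivative (\<lambda>z. g z * h z) (at w) i) differentiable (at z)"
    unfolding eq using assms i C2_diff unfolding C2_def by (intro differentiable_add differentiable_mult) auto
qed

lemma C2_sq:
  assumes "C2 g"
  shows "C2 (\<lambda>z. (g z)\<^sup>2)"
proof -
  have "(\<lambda>z. (g z)\<^sup>2) = (\<lambda>z. g z * g z)" by (simp add: power2_eq_square)
  then show ?thesis using C2_mult[OF assms assms] by simp
qed

lemma C2_grad: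
  assumes "C2 g"
  shows "grad g differentiable (at z)"
proof -
  have "(\<lambda>x. \<Sum>i\<in>Basis. frechet_derivative g (at x) i *\<^sub>R i) differentiable (at z)"
    using assms unfolding C2_def by (intro differentiable_sum) (auto intro!: differentiable_scaleR)
  moreover have "grad g = (\<lambda>x. \<Sum>i\<in>Basis. frechet_derivative g (at x) i *\<^sub>R i)"
    by (rule ext) (simp add: grad_def)
  ultimately show ?thesis by simp
qed

lemma grad_char':
  fixes g :: "'a::euclidean_space \<Rightarrow> real"
  assumes "(g has_derivative g') (at x)" "\<And>v. g' v = w \<bullet> v"
  shows "grad g x = w"
proof -
  have "g' = (\<lambda>v. w \<bullet> v)" using assms(2) by (rule ext)
  then show ?thesis using grad_char assms(1) by metis
qed

lemma grad_mult:
  fixes g h :: "'a::euclidean_space \<Rightarrow> real"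
  assumes "g differentiable (at x)" "h differentiable (at x)"
  shows "grad (\<lambda>z. g z * h z) x = h x *\<^sub>R grad g x + g x *\<^sub>R grad h x"
proof (rule grad_char')
  show "((\<lambda>z. g z * h z) has_derivative (\<lambda>v. g x * (grad h x \<bullet> v) + (grad g x \<bullet> v) * h x)) (at x)"
    using has_derivative_grad[OF assms(1)] has_derivative_grad[OF assms(2)] by (rule has_derivative_mult)
  show "g x * (grad h x \<bullet> v) + (grad g x \<bullet> v) * h x = (h x *\<^sub>R grad g x + g x *\<^sub>R grad h x) \<bullet> v" for v
    by (simp add: inner_add_left algebra_simps)
qed

lemma grad_add:
  fixes g h :: "'a::euclidean_space \<Rightarrow> real"
  assumes "g differentiable (at x)" "h differentiable (at x)"
  shows "grad (\<lambda>z. g z + h z) x = grad g x + grad h x"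
proof (rule grad_char')
  show "((\<lambda>z. g z + h z) has_derivative (\<lambda>v. (grad g x \<bullet> v) + (grad h x \<bullet> v))) (at x)"
    using has_derivative_grad[OF assms(1)] has_derivative_grad[OF assms(2)] by (rule has_derivative_add)
  show "(grad g x \<bullet> v) + (grad h x \<bullet> v) = (grad g x + grad h x) \<bullet> v" for v
    by (simp add: inner_add_left)
qed

lemma grad_ln:
  fixes g :: "'a::euclidean_space \<Rightarrow> real"
  assumes "g differentiable (at x)" "g x > 0"
  shows "grad (\<lambda>z. ln (g z)) x = (1 / g x) *\<^sub>R grad g x"
proof (rule grad_char')
  show "((\<lambda>z. ln (g z)) has_derivative (\<lambda>v. (grad g x \<bullet> v) * inverse (g x))) (at x)"
    using has_derivative_grad[OF assms(1)] assms(2) by (intro has_derivative_ln) auto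
  show "(grad g x \<bullet> v) * inverse (g x) = ((1 / g x) *\<^sub>R grad g x) \<bullet> v" for v
    by (simp add: field_simps)
qed

lemma grad_div:
  fixes g h :: "'a::euclidean_space \<Rightarrow> real"
  assumes "g differentiable (at x)" "h differentiable (at x)" "h x \<noteq> 0"
  shows "grad (\<lambda>z. g z / h z) x = (1 / h x) *\<^sub>R grad g x - (g x / (h x)\<^sup>2) *\<^sub>R grad h x"
proof (rule grad_char')
  show "((\<lambda>z. g z / h z) has_derivative (\<lambda>v. - g x * (inverse (h x) * (grad h x \<bullet> v) * inverse (h x)) + (grad g x \<bullet> v) / h x)) (at x)"
    using has_derivative_grad[OF assms(1)] has_derivative_grad[OF assms(2)] assms(3) by (rule has_derivative_divide)
  show "- g x * (inverse (h x) * (grad h x \<bullet> v) * inverse (h x)) + (grad g x \<bullet> v) / h x = ((1 / h x) *\<^sub>R grad g x - (g x / (h x)\<^sup>2) *\<^sub>R grad h x) \<bullet> v" for v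
    using assms(3) by (simp add: inner_diff_left field_simps power2_eq_square)
qed

lemma div_differentiable:
  fixes g h :: "'a::euclidean_space \<Rightarrow> real"
  assumes "g differentiable (at x)" "h differentiable (at x)" "h x \<noteq> 0"
  shows "(\<lambda>z. g z / h z) differentiable (at x)"
  using assms by (intro differentiable_divide) auto

lemma grad_ln_div:
  fixes g h :: "'a::euclidean_space \<Rightarrow> real"
  assumes "g differentiable (at x)" "h differentiable (at x)" "g x > 0" "h x > 0"
  shows "grad (\<lambda>z. ln (g z / h z)) x = (1 / g x) *\<^sub>R grad g x - (1 / h x) *\<^sub>R grad h x"
proof -
  have d: "(\<lambda>z. g z / h z) differentiable (at x)" using div_differentiable assms by force
  have "grad (\<lambda>z. ln (g z / h z)) x = (1 / (g x / h x)) *\<^sub>R grad (\<lambda>z. g z / h z) x"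
    using grad_ln[OF d] assms by simp
  also have "\<dots> = (1 / g x) *\<^sub>R grad g x - (1 / h x) *\<^sub>R grad h x"
    using assms by (simp add: grad_div scaleR_diff_right power2_eq_square)
  finally show ?thesis .
qed

lemma ln_div_differentiable:
  fixes g h :: "'a::euclidean_space \<Rightarrow> real"
  assumes "g differentiable (at x)" "h differentiable (at x)" "g x > 0" "h x > 0"
  shows "(\<lambda>z. ln (g z / h z)) differentiable (at x)"
proof -
  have d: "(\<lambda>z. g z / h z) differentiable (at x)" using div_differentiable assms by force
  then obtain D where "((\<lambda>z. g z / h z) has_derivative D) (at x)" unfolding differentiable_def by blast
  then have "((\<lambda>z. ln (g z / h z)) has_derivative (\<lambda>v. D v * inverse (g x / h x))) (at x)"
    using assms by (intro has_derivative_ln) auto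
  then show ?thesis unfolding differentiable_def by blast
qed

lemma amgm_inner:
  fixes u v :: "'a::real_inner"
  assumes "Bb > 0"
  shows "K * (u \<bullet> v) - Bb * (u \<bullet> u) \<le> K\<^sup>2 / (4 * Bb) * (norm v)\<^sup>2"
proof -
  have "0 \<le> (Bb *\<^sub>R u - (K/2) *\<^sub>R v) \<bullet> (Bb *\<^sub>R u - (K/2) *\<^sub>R v)" by simp
  also have "\<dots> = Bb\<^sup>2 * (u \<bullet> u) - Bb * K * (u \<bullet> v) + K\<^sup>2/4 * (v \<bullet> v)"
    by (simp add: inner_diff_left inner_diff_right inner_commute power2_eq_square algebra_simps)
  finally have "Bb * (K * (u \<bullet> v) - Bb * (u \<bullet> u)) \<le> Bb * (K\<^sup>2 / (4 * Bb) * (v \<bullet> v))"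
    using assms by (simp add: field_simps power2_eq_square)
  then have "K * (u \<bullet> v) - Bb * (u \<bullet> u) \<le> K\<^sup>2 / (4 * Bb) * (v \<bullet> v)"
    using assms by (rule mult_left_le_imp_le)
  then show ?thesis by (simp add: power2_norm_eq_inner)
qed

lemma key_alg:
  fixes F gS gB Sh gq gh :: "'a::real_inner" and q h S Bb :: real
  assumes q: "q > 0" and h: "h > 0" and Bb: "Bb > 0"
  shows "- (((1 / q) *\<^sub>R gq - (1 / h) *\<^sub>R gh) \<bullet> (q *\<^sub>R F - (q *\<^sub>R gS + S *\<^sub>R gq)))
     + (((1 / h) *\<^sub>R gq - (q / h\<^sup>2) *\<^sub>R gh) \<bullet> (- (h *\<^sub>R (- F + (gS + gB) + (S + Bb) *\<^sub>R Sh)) + (h *\<^sub>R gB + Bb *\<^sub>R gh)))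
     \<le> (S + Bb)\<^sup>2 / (4 * Bb) * (norm ((1 / q) *\<^sub>R gq - Sh))\<^sup>2 * q"
proof -
  define a where "a = (1 / q) *\<^sub>R gq"
  define c where "c = (1 / h) *\<^sub>R gh"
  have gq: "gq = q *\<^sub>R a" using q by (simp add: a_def)
  have gh: "gh = h *\<^sub>R c" using h by (simp add: c_def)
  have e1: "(1 / h) *\<^sub>R gq - (q / h\<^sup>2) *\<^sub>R gh = (q / h) *\<^sub>R (a - c)"
    using q h by (simp add: gq gh scaleR_diff_right power2_eq_square)
  have e2: "- (h *\<^sub>R (- F + (gS + gB) + (S + Bb) *\<^sub>R Sh)) + (h *\<^sub>R gB + Bb *\<^sub>R gh)
      = h *\<^sub>R (F - gS - (S + Bb) *\<^sub>R Sh + Bb *\<^sub>R c)"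
    by (simp add: gh algebra_simps)
  have e3: "q *\<^sub>R F - (q *\<^sub>R gS + S *\<^sub>R gq) = q *\<^sub>R (F - gS - S *\<^sub>R a)"
    by (simp add: gq algebra_simps)
  have "- (((1 / q) *\<^sub>R gq - (1 / h) *\<^sub>R gh) \<bullet> (q *\<^sub>R F - (q *\<^sub>R gS + S *\<^sub>R gq)))
     + (((1 / h) *\<^sub>R gq - (q / h\<^sup>2) *\<^sub>R gh) \<bullet> (- (h *\<^sub>R (- F + (gS + gB) + (S + Bb) *\<^sub>R Sh)) + (h *\<^sub>R gB + Bb *\<^sub>R gh)))
     = - ((a - c) \<bullet> (q *\<^sub>R (F - gS - S *\<^sub>R a))) + ((q / h) *\<^sub>R (a - c)) \<bullet> (h *\<^sub>R (F - gS - (S + Bb) *\<^sub>R Sh + Bb *\<^sub>R c))"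
    unfolding e1 e2 e3 a_def[symmetric] c_def[symmetric] by simp
  also have "\<dots> = q * ((a - c) \<bullet> (S *\<^sub>R a - (S + Bb) *\<^sub>R Sh + Bb *\<^sub>R c))"
    using h by (simp add: inner_diff_right inner_add_right algebra_simps)
  also have "(S *\<^sub>R a - (S + Bb) *\<^sub>R Sh + Bb *\<^sub>R c) = (S + Bb) *\<^sub>R (a - Sh) - Bb *\<^sub>R (a - c)"
    by (simp add: algebra_simps)
  also have "q * ((a - c) \<bullet> ((S + Bb) *\<^sub>R (a - Sh) - Bb *\<^sub>R (a - c))) = q * ((S + Bb) * ((a - c) \<bullet> (a - Sh)) - Bb * ((a - c) \<bullet> (a - c)))"
    by (simp add: inner_diff_right)
  also have "\<dots> \<le> q * ((S + Bb)\<^sup>2 / (4 * Bb) * (norm (a - Sh))\<^sup>2)"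
    using amgm_inner[OF Bb, of "S + Bb" "a - c" "a - Sh"] q by (intro mult_left_mono) auto
  finally show ?thesis by (simp add: a_def mult.commute)
qed

lemma pointwise:
  fixes T t :: real
    and f :: "real \<Rightarrow> 'a::euclidean_space \<Rightarrow> 'a"
    and sig :: "real \<Rightarrow> 'a \<Rightarrow> real"
    and b :: "real \<Rightarrow> 'a \<Rightarrow> real"
    and shat :: "real \<Rightarrow> 'a \<Rightarrow> 'a"
    and p ph :: "real \<Rightarrow> 'a \<Rightarrow> real"
  assumes t: "t \<in> {0<..<T}"
    and f_smooth: "smooth_on_set ({0..T} \<times> UNIV) (\<lambda>(t, y). f t y)"
    and sig_smooth: "smooth_on_set ({0..T} \<times> UNIV) (\<lambda>(t, y). sig t y)"
    and b_smooth: "smooth_on_set ({0..T} \<times> UNIV) (\<lambda>(t, y). b t y)"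
    and b_nz: "\<And>t y. t \<in> {0..T} \<Longrightarrow> b t y \<noteq> 0"
    and shat_smooth: "smooth_on_set ({0..T} \<times> UNIV) (\<lambda>(t, y). shat t y)"
    and p_smooth: "smooth_on_set ({0..T} \<times> UNIV) (\<lambda>(t, y). p t y)"
    and p_pos: "\<And>t y. t \<in> {0..T} \<Longrightarrow> p t y > 0"
    and p_FP: "\<And>t y. t \<in> {0<..<T} \<Longrightarrow>
        dt p t y = - divg (\<lambda>z. p t z *\<^sub>R f t z) y + lap (\<lambda>z. (sig t z)\<^sup>2 * p t z) y"
    and ph_smooth: "smooth_on_set ({0..T} \<times> UNIV) (\<lambda>(t, y). ph t y)"
    and ph_pos: "\<And>t y. t \<in> {0..T} \<Longrightarrow> ph t y > 0"
    and ph_FP: "\<And>t y. t \<in> {0<..<T} \<Longrightarrow>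
        dt ph t y = - divg (\<lambda>z. ph t z *\<^sub>R fhat T f sig b shat t z) y
                    + lap (\<lambda>z. (b t z)\<^sup>2 * ph t z) y"
  shows "dt (\<lambda>s y. p (T - s) y) t y = divg (Jrev T p f sig t) y"
    and "dt (\<lambda>s y. p (T - s) y * ln (p (T - s) y / ph s y)) t y
        - divg (\<lambda>y. ln (p (T - t) y / ph t y) *\<^sub>R Jrev T p f sig t y) y
        - dt (\<lambda>s y. p (T - s) y) t y
        + divg (\<lambda>y. (p (T - t) y / ph t y) *\<^sub>R Jhat ph (fhat T f sig b shat) b t y) y
        \<le> ((sig (T - t) y)\<^sup>2 + (b t y)\<^sup>2)\<^sup>2 / (4 * (b t y)\<^sup>2)
                * (norm (grad (\<lambda>z. ln (p (T - t) z)) y - shat (T - t) y))\<^sup>2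
                * p (T - t) y"
proof -
  have t1: "T - t \<in> {0..T}" "T - t \<in> {0<..<T}" using t by auto
  have t0: "t \<in> {0..T}" using t by auto
  have Cq: "C2 (p (T - t))" by (rule C2_slice[OF p_smooth t1(1)])
  have Ch: "C2 (ph t)" by (rule C2_slice[OF ph_smooth t0])
  have Cs: "C2 (sig (T - t))" by (rule C2_slice[OF sig_smooth t1(1)])
  have Cb: "C2 (b t)" by (rule C2_slice[OF b_smooth t0])
  have dF: "\<And>z. f (T - t) differentiable (at z)" by (rule slice_diff_vec[OF f_smooth t1(1)])
  have dSh: "\<And>z. shat (T - t) differentiable (at z)" by (rule slice_diff_vec[OF shat_smooth t1(1)])
  have CS: "C2 (\<lambda>z. (sig (T - t) z)\<^sup>2)" by (rule C2_sq[OF Cs])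
  have CB: "C2 (\<lambda>z. (b t z)\<^sup>2)" by (rule C2_sq[OF Cb])
  have CSq: "C2 (\<lambda>z. (sig (T - t) z)\<^sup>2 * p (T - t) z)" using C2_mult[OF CS Cq] by simp
  have CBh: "C2 (\<lambda>z. (b t z)\<^sup>2 * ph t z)" using C2_mult[OF CB Ch] by simp
  have CSB: "C2 (\<lambda>z. (sig (T - t) z)\<^sup>2 + (b t z)\<^sup>2)" using C2_add[OF CS CB] by simp
  have qpos: "\<And>z. p (T - t) z > 0" using p_pos t1(1) by blast
  have hpos: "\<And>z. ph t z > 0" using ph_pos t0 by blast
  have Bpos: "(b t y)\<^sup>2 > 0" using b_nz[OF t0, of y] by simp

  have Jr_eq: "Jrev T p f sig t = (\<lambda>z. p (T - t) z *\<^sub>R f (T - t) z - grad (\<lambda>z. (sig (T - t) z)\<^sup>2 * p (T - t) z) z)"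
    by (rule ext) (simp add: Jrev_def)
  have fh_eq: "fhat T f sig b shat t = (\<lambda>z. - f (T - t) z + grad (\<lambda>z. (sig (T - t) z)\<^sup>2 + (b t z)\<^sup>2) z
      + ((sig (T - t) z)\<^sup>2 + (b t z)\<^sup>2) *\<^sub>R shat (T - t) z)"
    by (rule ext) (simp add: fhat_def)
  have Jh_eq: "Jhat ph (fhat T f sig b shat) b t = (\<lambda>z. - (ph t z *\<^sub>R fhat T f sig b shat t z) + grad (\<lambda>z. (b t z)\<^sup>2 * ph t z) z)"
    by (rule ext) (simp add: Jhat_def)

  have dpf: "\<And>z. (\<lambda>z. p (T - t) z *\<^sub>R f (T - t) z) differentiable (at z)"
    using C2_diff[OF Cq] dF by (intro differentiable_scaleR) auto
  have dgSq: "\<And>z. grad (\<lambda>z. (sig (T - t) z)\<^sup>2 * p (T - t) z) differentiable (at z)"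
    by (rule C2_grad[OF CSq])
  have dJr: "\<And>z. Jrev T p f sig t differentiable (at z)"
    unfolding Jr_eq using dpf dgSq by (intro differentiable_diff) auto
  have dfh: "\<And>z. fhat T f sig b shat t differentiable (at z)"
    unfolding fh_eq using dF C2_grad[OF CSB] C2_diff[OF CSB] dSh C2_diff[OF CS] C2_diff[OF CB]
    by (intro differentiable_add differentiable_minus differentiable_scaleR) auto
  have dhfh: "\<And>z. (\<lambda>z. ph t z *\<^sub>R fhat T f sig b shat t z) differentiable (at z)"
    using C2_diff[OF Ch] dfh by (intro differentiable_scaleR) auto
  have dgBh: "\<And>z. grad (\<lambda>z. (b t z)\<^sup>2 * ph t z) differentiable (at z)"
    by (rule C2_grad[OF CBh])
  have dJh: "\<And>z. Jhat ph (fhat T f sig b shat) b t differentiable (at z)"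
    unfolding Jh_eq using dhfh dgBh by (intro differentiable_add differentiable_minus) auto

  define Dp where "Dp = frechet_derivative (\<lambda>(t, y). p t y) (at (T - t, y)) (1, 0)"
  have st: "((\<lambda>s. p s y) has_real_derivative Dp) (at (T - t))"
    using slice_time[OF smooth_slice(1)[OF p_smooth t1(1)], of y] unfolding Dp_def by simp
  have dtp: "dt p (T - t) y = Dp" unfolding dt_def using DERIV_imp_deriv[OF st] .
  have dm: "((\<lambda>s. T - s) has_real_derivative -1) (at t)"
    by (auto intro!: derivative_eq_intros)
  have st2: "((\<lambda>s. p (T - s) y) has_real_derivative - Dp) (at t)"
    using DERIV_chain2[OF st dm] by simp
  have dtq: "dt (\<lambda>s y. p (T - s) y) t y = - Dp" unfolding dt_def using DERIV_imp_deriv[OF st2] by simp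
  define Dh where "Dh = frechet_derivative (\<lambda>(t, y). ph t y) (at (t, y)) (1, 0)"
  have sth: "((\<lambda>s. ph s y) has_real_derivative Dh) (at t)"
    using slice_time[OF smooth_slice(1)[OF ph_smooth t0], of y] unfolding Dh_def by simp
  have dth: "dt ph t y = Dh" unfolding dt_def using DERIV_imp_deriv[OF sth] .

  have divJr: "divg (Jrev T p f sig t) y = divg (\<lambda>z. p (T - t) z *\<^sub>R f (T - t) z) y - lap (\<lambda>z. (sig (T - t) z)\<^sup>2 * p (T - t) z) y"
    unfolding Jr_eq lap_def by (rule divg_diff[OF dpf dgSq])
  show E1: "dt (\<lambda>s y. p (T - s) y) t y = divg (Jrev T p f sig t) y"
    using p_FP[OF t1(2), of y] divJr dtp dtq by simp
  have divJh: "divg (Jhat ph (fhat T f sig b shat) b t) y = - divg (\<lambda>z. ph t z *\<^sub>R fhat T f sig b shat t z) y + lap (\<lambda>z. (b t z)\<^sup>2 * ph t z) y"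
    unfolding Jh_eq lap_def by (rule divg_neg_add[OF dhfh dgBh])
  have E2: "dt ph t y = divg (Jhat ph (fhat T f sig b shat) b t) y"
    using ph_FP[OF t, of y] divJh by simp

  let ?q = "p (T - t) y" and ?h = "ph t y"
  have qy: "?q > 0" by (rule qpos)
  have hy: "?h > 0" by (rule hpos)
  have dr: "((\<lambda>s. p (T - s) y / ph s y) has_real_derivative ((- Dp) * ?h - ?q * Dh) / (?h * ?h)) (at t)"
    using DERIV_divide[OF st2 sth] hy by simp
  have dl: "((\<lambda>s. ln (p (T - s) y / ph s y)) has_real_derivative inverse (?q / ?h) * (((- Dp) * ?h - ?q * Dh) / (?h * ?h))) (at t)"
    using DERIV_chain2[OF DERIV_ln dr] qy hy by simp
  have dprod: "((\<lambda>s. p (T - s) y * ln (p (T - s) y / ph s y)) has_real_derivative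
      (- Dp) * ln (?q / ?h) + inverse (?q / ?h) * (((- Dp) * ?h - ?q * Dh) / (?h * ?h)) * ?q) (at t)"
    using DERIV_mult[OF st2 dl] by simp
  have "(- Dp) * ln (?q / ?h) + inverse (?q / ?h) * (((- Dp) * ?h - ?q * Dh) / (?h * ?h)) * ?q
      = (- Dp) * ln (?q / ?h) + (- Dp) - ?q / ?h * Dh"
    using qy hy by (simp add: field_simps)
  then have dtd: "dt (\<lambda>s y. p (T - s) y * ln (p (T - s) y / ph s y)) t y
      = (- Dp) * ln (?q / ?h) + (- Dp) - ?q / ?h * Dh"
    unfolding dt_def using DERIV_imp_deriv[OF dprod] by simp

  have dL: "(\<lambda>z. ln (p (T - t) z / ph t z)) differentiable (at y)"
    using ln_div_differentiable[OF C2_diff[OF Cq] C2_diff[OF Ch] qpos hpos] .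
  have dR: "(\<lambda>z. p (T - t) z / ph t z) differentiable (at y)"
    using div_differentiable[OF C2_diff[OF Cq] C2_diff[OF Ch]] hpos by (metis less_irrefl)
  have div2: "divg (\<lambda>y. ln (p (T - t) y / ph t y) *\<^sub>R Jrev T p f sig t y) y
      = ln (?q / ?h) * divg (Jrev T p f sig t) y + grad (\<lambda>z. ln (p (T - t) z / ph t z)) y \<bullet> Jrev T p f sig t y"
    using divg_scaleR[OF dL dJr] by simp
  have div3: "divg (\<lambda>y. (p (T - t) y / ph t y) *\<^sub>R Jhat ph (fhat T f sig b shat) b t y) y
      = ?q / ?h * divg (Jhat ph (fhat T f sig b shat) b t) y + grad (\<lambda>z. p (T - t) z / ph t z) y \<bullet> Jhat ph (fhat T f sig b shat) b t y"
    using divg_scaleR[OF dR dJh] by simp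

  have red: "dt (\<lambda>s y. p (T - s) y * ln (p (T - s) y / ph s y)) t y
        - divg (\<lambda>y. ln (p (T - t) y / ph t y) *\<^sub>R Jrev T p f sig t y) y
        - dt (\<lambda>s y. p (T - s) y) t y
        + divg (\<lambda>y. (p (T - t) y / ph t y) *\<^sub>R Jhat ph (fhat T f sig b shat) b t y) y
      = - (grad (\<lambda>z. ln (p (T - t) z / ph t z)) y \<bullet> Jrev T p f sig t y)
        + grad (\<lambda>z. p (T - t) z / ph t z) y \<bullet> Jhat ph (fhat T f sig b shat) b t y"
    unfolding dtd div2 div3 using E1 E2 dtq dth by (simp add: algebra_simps)

  let ?gq = "grad (p (T - t)) y" and ?gh = "grad (ph t) y"
  let ?gS = "grad (\<lambda>z. (sig (T - t) z)\<^sup>2) y" and ?gB = "grad (\<lambda>z. (b t z)\<^sup>2) y"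
  let ?S = "(sig (T - t) y)\<^sup>2" and ?Bb = "(b t y)\<^sup>2"
  have gl: "grad (\<lambda>z. ln (p (T - t) z / ph t z)) y = (1 / ?q) *\<^sub>R ?gq - (1 / ?h) *\<^sub>R ?gh"
    by (rule grad_ln_div[OF C2_diff[OF Cq] C2_diff[OF Ch] qpos hpos])
  have gd: "grad (\<lambda>z. p (T - t) z / ph t z) y = (1 / ?h) *\<^sub>R ?gq - (?q / ?h\<^sup>2) *\<^sub>R ?gh"
    using grad_div[OF C2_diff[OF Cq] C2_diff[OF Ch]] hy by (metis less_irrefl)
  have glq: "grad (\<lambda>z. ln (p (T - t) z)) y = (1 / ?q) *\<^sub>R ?gq"
    by (rule grad_ln[OF C2_diff[OF Cq] qpos])
  have gSq: "grad (\<lambda>z. (sig (T - t) z)\<^sup>2 * p (T - t) z) y = ?q *\<^sub>R ?gS + ?S *\<^sub>R ?gq"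
    by (rule grad_mult[OF C2_diff[OF CS] C2_diff[OF Cq]])
  have gSB: "grad (\<lambda>z. (sig (T - t) z)\<^sup>2 + (b t z)\<^sup>2) y = ?gS + ?gB"
    by (rule grad_add[OF C2_diff[OF CS] C2_diff[OF CB]])
  have gBh: "grad (\<lambda>z. (b t z)\<^sup>2 * ph t z) y = ?h *\<^sub>R ?gB + ?Bb *\<^sub>R ?gh"
    by (rule grad_mult[OF C2_diff[OF CB] C2_diff[OF Ch]])
  have Jry: "Jrev T p f sig t y = ?q *\<^sub>R f (T - t) y - (?q *\<^sub>R ?gS + ?S *\<^sub>R ?gq)"
    using Jr_eq gSq by simp
  have fhy: "fhat T f sig b shat t y = - f (T - t) y + (?gS + ?gB) + (?S + ?Bb) *\<^sub>R shat (T - t) y"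
    using fh_eq gSB by simp
  have Jhy: "Jhat ph (fhat T f sig b shat) b t y = - (?h *\<^sub>R (- f (T - t) y + (?gS + ?gB) + (?S + ?Bb) *\<^sub>R shat (T - t) y)) + (?h *\<^sub>R ?gB + ?Bb *\<^sub>R ?gh)"
    using Jh_eq gBh fhy by simp
  show "dt (\<lambda>s y. p (T - s) y * ln (p (T - s) y / ph s y)) t y
        - divg (\<lambda>y. ln (p (T - t) y / ph t y) *\<^sub>R Jrev T p f sig t y) y
        - dt (\<lambda>s y. p (T - s) y) t y
        + divg (\<lambda>y. (p (T - t) y / ph t y) *\<^sub>R Jhat ph (fhat T f sig b shat) b t y) y
        \<le> ((sig (T - t) y)\<^sup>2 + (b t y)\<^sup>2)\<^sup>2 / (4 * (b t y)\<^sup>2)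
                * (norm (grad (\<lambda>z. ln (p (T - t) z)) y - shat (T - t) y))\<^sup>2
                * p (T - t) y"
    unfolding red gl gd glq Jry Jhy
    by (rule key_alg[OF qy hy Bpos])
qed

lemma outer:
  fixes D :: "real \<Rightarrow> real" and G :: "real \<Rightarrow> ennreal"
  assumes DI: "(D has_integral V) {a..b}"
    and le: "\<And>s. s \<in> {a..b} \<Longrightarrow> ennreal (max (D s) 0) \<le> G s"
    and fin: "(\<integral>\<^sup>+ t\<in>{a..b}. G t \<partial>lborel) = ennreal r" and r: "r \<ge> 0"
  shows "V \<le> r"
proof -
  let ?P = "\<lambda>x. max (D x) 0"
  have m: "(\<lambda>x. indicator {a..b} x *\<^sub>R D x) \<in> borel_measurable lebesgue"
    by (rule has_integral_implies_lebesgue_measurable[OF DI])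
  then obtain f' where f'[measurable]: "f' \<in> borel_measurable borel"
      and ae: "AE x in lborel. indicator {a..b} x *\<^sub>R D x = f' x"
    by (auto dest: completion_ex_borel_measurable_real)
  define P' where "P' x = max (f' x) 0" for x
  have P'm[measurable]: "P' \<in> borel_measurable borel" unfolding P'_def by measurable
  have ae2: "AE x in lborel. P' x = indicator {a..b} x * ?P x"
    using ae by eventually_elim (auto simp: P'_def indicator_def)
  have "(\<integral>\<^sup>+x. ennreal (P' x) \<partial>lborel) = (\<integral>\<^sup>+x. ennreal (indicator {a..b} x * ?P x) \<partial>lborel)"
    by (rule nn_integral_cong_AE) (use ae2 in auto)
  also have "\<dots> \<le> (\<integral>\<^sup>+ t\<in>{a..b}. G t \<partial>lborel)"
    by (rule nn_integral_mono) (auto simp: indicator_def le)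
  finally have le2: "(\<integral>\<^sup>+x. ennreal (P' x) \<partial>lborel) \<le> ennreal r" using fin by simp
  obtain r' where r': "(\<integral>\<^sup>+x. ennreal (P' x) \<partial>lborel) = ennreal r'" "0 \<le> r'" "r' \<le> r"
  proof (cases "(\<integral>\<^sup>+x. ennreal (P' x) \<partial>lborel)" rule: ennreal_cases)
    case (real x)
    then show ?thesis using that le2 r by (auto simp: ennreal_le_iff)
  next
    case top
    then show ?thesis using le2 by (simp add: top_unique)
  qed
  have "(P' has_integral r') UNIV"
    by (rule nn_integral_has_integral) (use r' P'm in \<open>auto simp: P'_def\<close>)
  then have "((\<lambda>x. indicator {a..b} x * ?P x) has_integral r') UNIV"
  proof -
    have "AE x in lborel. x \<in> UNIV \<longrightarrow> indicator {a..b} x * ?P x = P' x"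
      using ae2 by eventually_elim auto
    from has_integral_AE[OF this, of r'] show ?thesis using \<open>(P' has_integral r') UNIV\<close> by simp
  qed
  moreover have "(\<lambda>x. indicator {a..b} x * ?P x) = (\<lambda>x. if x \<in> {a..b} then ?P x else 0)"
    by (auto simp: indicator_def)
  ultimately have "(?P has_integral r') {a..b}"
    using has_integral_restrict_UNIV by metis
  then have "V \<le> r'" by (rule has_integral_le[OF DI]) auto
  then show ?thesis using r' by simp
qed

theorem mainTheorem8:
  fixes T :: real
    and f :: "real \<Rightarrow> 'a::euclidean_space \<Rightarrow> 'a"
    and sig :: "real \<Rightarrow> 'a \<Rightarrow> real"
    and b :: "real \<Rightarrow> 'a \<Rightarrow> real"
    and shat :: "real \<Rightarrow> 'a \<Rightarrow> 'a"
    and p ph :: "real \<Rightarrow> 'a \<Rightarrow> real"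
    and pinf :: "'a \<Rightarrow> real"
  assumes T_pos: "T > 0"
    and f_smooth: "smooth_on_set ({0..T} \<times> UNIV) (\<lambda>(t, y). f t y)"
    and sig_smooth: "smooth_on_set ({0..T} \<times> UNIV) (\<lambda>(t, y). sig t y)"
    and b_smooth: "smooth_on_set ({0..T} \<times> UNIV) (\<lambda>(t, y). b t y)"
    and b_nz: "\<And>t y. t \<in> {0..T} \<Longrightarrow> b t y \<noteq> 0"
    and shat_smooth: "smooth_on_set ({0..T} \<times> UNIV) (\<lambda>(t, y). shat t y)"
    and pinf_smooth: "smooth_on UNIV pinf"
    and pinf_dens: "is_pos_density pinf"
    \<comment> \<open>(p_tau): smooth positive densities solving the forward Fokker-Planck equation\<close>
    and p_smooth: "smooth_on_set ({0..T} \<times> UNIV) (\<lambda>(t, y). p t y)"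
    and p_dens: "\<And>t. t \<in> {0..T} \<Longrightarrow> is_pos_density (p t)"
    and p_FP: "\<And>t y. t \<in> {0<..<T} \<Longrightarrow>
        dt p t y = - divg (\<lambda>z. p t z *\<^sub>R f t z) y + lap (\<lambda>z. (sig t z)\<^sup>2 * p t z) y"
    \<comment> \<open>(phat_tau): smooth positive densities of the approximate reverse process, phat_0 = pinf\<close>
    and ph_smooth: "smooth_on_set ({0..T} \<times> UNIV) (\<lambda>(t, y). ph t y)"
    and ph_dens: "\<And>t. t \<in> {0..T} \<Longrightarrow> is_pos_density (ph t)"
    and ph_init: "ph 0 = pinf"
    and ph_FP: "\<And>t y. t \<in> {0<..<T} \<Longrightarrow>
        dt ph t y = - divg (\<lambda>z. ph t z *\<^sub>R fhat T f sig b shat t z) y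
                    + lap (\<lambda>z. (b t z)\<^sup>2 * ph t z) y"
    \<comment> \<open>regularity: finiteness/continuity of the KL along the flow\<close>
    and reg_KL_int: "\<And>t. t \<in> {0..T} \<Longrightarrow>
        integrable lborel (\<lambda>y. p (T - t) y * ln (p (T - t) y / ph t y))"
    and reg_KL_cont: "continuous_on {0..T} (\<lambda>t. KL (p (T - t)) (ph t))"
    \<comment> \<open>regularity: interchange of time derivative and integral\<close>
    and reg_KL_deriv: "\<And>t. t \<in> {0<..<T} \<Longrightarrow>
        integrable lborel (dt (\<lambda>s y. p (T - s) y * ln (p (T - s) y / ph s y)) t) \<and>
        ((\<lambda>s. KL (p (T - s)) (ph s)) has_real_derivative
           (\<integral>y. dt (\<lambda>s y. p (T - s) y * ln (p (T - s) y / ph s y)) t y \<partial>lborel)) (at t)"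
    and reg_pieces: "\<And>t. t \<in> {0<..<T} \<Longrightarrow>
        integrable lborel (\<lambda>y. dt (\<lambda>s y. p (T - s) y) t y * ln (p (T - t) y / ph t y)) \<and>
        integrable lborel (\<lambda>y. dt (\<lambda>s y. p (T - s) y) t y) \<and>
        integrable lborel (\<lambda>y. p (T - t) y / ph t y * dt ph t y)"
    \<comment> \<open>regularity: vanishing boundary terms in the integrations by parts\<close>
    and reg_bdry1: "\<And>t. t \<in> {0<..<T} \<Longrightarrow>
        integrable lborel (divg (Jrev T p f sig t)) \<and>
        (\<integral>y. divg (Jrev T p f sig t) y \<partial>lborel) = 0"
    and reg_bdry2: "\<And>t. t \<in> {0<..<T} \<Longrightarrow>
        integrable lborel (divg (\<lambda>y. ln (p (T - t) y / ph t y) *\<^sub>R Jrev T p f sig t y)) \<and>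
        (\<integral>y. divg (\<lambda>y. ln (p (T - t) y / ph t y) *\<^sub>R Jrev T p f sig t y) y \<partial>lborel) = 0"
    and reg_bdry3: "\<And>t. t \<in> {0<..<T} \<Longrightarrow>
        integrable lborel (divg (\<lambda>y. (p (T - t) y / ph t y) *\<^sub>R Jhat ph (fhat T f sig b shat) b t y)) \<and>
        (\<integral>y. divg (\<lambda>y. (p (T - t) y / ph t y) *\<^sub>R Jhat ph (fhat T f sig b shat) b t y) y \<partial>lborel) = 0"
  shows "ereal (KL (p 0) (ph T)) \<le>
           ereal (KL (p T) pinf) +
           enn2ereal (\<integral>\<^sup>+ t \<in> {0..T}. (\<integral>\<^sup>+ y.
              ennreal (((sig (T - t) y)\<^sup>2 + (b t y)\<^sup>2)\<^sup>2 / (4 * (b t y)\<^sup>2)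
                * (norm (grad (\<lambda>z. ln (p (T - t) z)) y - shat (T - t) y))\<^sup>2
                * p (T - t) y) \<partial>lborel) \<partial>lborel)"
proof -
  have p_pos: "\<And>t y. t \<in> {0..T} \<Longrightarrow> p t y > 0" using p_dens unfolding is_pos_density_def by blast
  have ph_pos: "\<And>t y. t \<in> {0..T} \<Longrightarrow> ph t y > 0" using ph_dens unfolding is_pos_density_def by blast
  note PW = pointwise[OF _ f_smooth sig_smooth b_smooth b_nz shat_smooth p_smooth p_pos p_FP ph_smooth ph_pos ph_FP]
  define F where "F = (\<lambda>s. KL (p (T - s)) (ph s))"
  define d where "d = (\<lambda>s. dt (\<lambda>s y. p (T - s) y * ln (p (T - s) y / ph s y)) s)"
  define D where "D = (\<lambda>s. if s \<in> {0<..<T} then (\<integral>y. d s y \<partial>lborel) else 0)"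
  define g where "g = (\<lambda>t y. ((sig (T - t) y)\<^sup>2 + (b t y)\<^sup>2)\<^sup>2 / (4 * (b t y)\<^sup>2)
                * (norm (grad (\<lambda>z. ln (p (T - t) z)) y - shat (T - t) y))\<^sup>2
                * p (T - t) y)"
  define G where "G = (\<lambda>t. \<integral>\<^sup>+ y. ennreal (g t y) \<partial>lborel)"
  have FTC: "(D has_integral (F T - F 0)) {0..T}"
  proof (rule fundamental_theorem_of_calculus_interior)
    show "0 \<le> T" using T_pos by simp
    show "continuous_on {0..T} F" using reg_KL_cont unfolding F_def .
    fix x assume x: "x \<in> {0<..<T}"
    have "(F has_real_derivative D x) (at x)"
      using reg_KL_deriv[OF x] x unfolding F_def D_def d_def by simp
    then show "(F has_vector_derivative D x) (at x)"
      by (simp add: has_real_derivative_iff_has_vector_derivative)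
  qed
  have Dle: "ennreal (max (D s) 0) \<le> G s" if s: "s \<in> {0..T}" for s
  proof (cases "s \<in> {0<..<T}")
    case False
    then have "D s = 0" by (auto simp: D_def)
    then show ?thesis by simp
  next
    case True
    let ?B = "\<lambda>y. dt (\<lambda>s y. p (T - s) y) s y"
    let ?d2 = "divg (\<lambda>y. ln (p (T - s) y / ph s y) *\<^sub>R Jrev T p f sig s y)"
    let ?d3 = "divg (\<lambda>y. (p (T - s) y / ph s y) *\<^sub>R Jhat ph (fhat T f sig b shat) b s y)"
    define e where "e y = d s y - ?d2 y - ?B y + ?d3 y" for y
    have id: "integrable lborel (d s)" using reg_KL_deriv[OF True] unfolding d_def by simp
    have i2: "integrable lborel ?d2" "integral\<^sup>L lborel ?d2 = 0" using reg_bdry2[OF True] by auto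
    have i3: "integrable lborel ?d3" "integral\<^sup>L lborel ?d3 = 0" using reg_bdry3[OF True] by auto
    have iB: "integrable lborel ?B" using reg_pieces[OF True] by simp
    have Beq: "?B y = divg (Jrev T p f sig s) y" for y by (rule PW(1)[OF True])
    have iB0: "(\<integral>y. ?B y \<partial>lborel) = 0"
      using reg_bdry1[OF True] Beq by simp
    have ie: "integrable lborel e" unfolding e_def using id i2 iB i3 by auto
    have inte: "(\<integral>y. e y \<partial>lborel) = (\<integral>y. d s y \<partial>lborel)"
      unfolding e_def using id i2 iB i3 iB0 by (simp add: Bochner_Integration.integral_diff Bochner_Integration.integral_add)
    have eg: "e y \<le> g s y" for y
      unfolding e_def d_def g_def using PW(2)[OF True, of y] by simp
    have g0: "0 \<le> g s y" for y
    proof -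
      have "(b s y)\<^sup>2 > 0" using b_nz[of s y] s by simp
      moreover have "p (T - s) y > 0" using p_pos s by simp
      ultimately show ?thesis unfolding g_def by (intro mult_nonneg_nonneg divide_nonneg_pos) auto
    qed
    have iem: "integrable lborel (\<lambda>y. max (e y) 0)" using ie by auto
    have "max (D s) 0 \<le> (\<integral>y. max (e y) 0 \<partial>lborel)"
    proof -
      have "(\<integral>y. e y \<partial>lborel) \<le> (\<integral>y. max (e y) 0 \<partial>lborel)"
        by (rule integral_mono[OF ie iem]) auto
      moreover have "0 \<le> (\<integral>y. max (e y) 0 \<partial>lborel)" by (rule integral_nonneg_AE) auto
      ultimately show ?thesis using True inte by (simp add: D_def)
    qed
    then have "ennreal (max (D s) 0) \<le> ennreal (\<integral>y. max (e y) 0 \<partial>lborel)" by (rule ennreal_leI)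
    also have "\<dots> = (\<integral>\<^sup>+y. ennreal (max (e y) 0) \<partial>lborel)"
      by (rule nn_integral_eq_integral[OF iem, symmetric]) auto
    also have "\<dots> \<le> G s" unfolding G_def
      by (rule nn_integral_mono) (use eg g0 in \<open>auto intro!: ennreal_leI\<close>)
    finally show ?thesis .
  qed
  have main: "ereal (F T) \<le> ereal (F 0) + enn2ereal (\<integral>\<^sup>+ t\<in>{0..T}. G t \<partial>lborel)"
  proof (cases "(\<integral>\<^sup>+ t\<in>{0..T}. G t \<partial>lborel)" rule: ennreal_cases)
    case top
    then show ?thesis by simp
  next
    case (real r)
    have "F T - F 0 \<le> r" by (rule outer[OF FTC Dle real(2) real(1)])
    then show ?thesis using real by simp
  qed
  then show ?thesis using ph_init by (simp add: F_def G_def g_def)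
qed

end
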